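(* Let $p$ be a prime, $l\ge 1$ an integer and $q=p^l$. Let $P(q)$ be the $q\times q$ matrix with entries $\binom{i+j}{i}$, $0\le i,j<q$. Then the reduction of $P(q)$ modulo $p$ has multiplicative order $3$ in $\mathrm{GL}(q,\mathbf{F}_p)$, and its characteristic polynomial $\chi_q(t)=\det(tI(q)-P(q))$ satisfies $$\chi_q(t)\equiv (t^2+t+1)^{\frac{q-\epsilon(q)}{3}}(t-1)^{\frac{q+2\epsilon(q)}{3}}\pmod p,$$ where $\epsilon(q)\in\{-1,0,1\}$ is defined by $\epsilon(q)\equiv q\pmod 3$.
   Context: $I(q)$ denotes the $q\times q$ identity matrix. *)

theory Defs
  imports "Jordan_Normal_Form.Determinant" "Jordan_Normal_Form.Char_Poly"
    "Berlekamp_Zassenhaus.Finite_Field"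
begin

definition pascal_mat :: "nat \<Rightarrow> 'a :: comm_ring_1 mat" where
  "pascal_mat q = mat q q (\<lambda>(i, j). of_nat ((i + j) choose i))"

definition mat_mult_order :: "'a :: comm_ring_1 mat \<Rightarrow> nat" where
  "mat_mult_order A = (LEAST k. 0 < k \<and> A ^\<^sub>m k = 1\<^sub>m (dim_row A))"

definition eps3 :: "nat \<Rightarrow> int" where
  "eps3 q = (if q mod 3 = 0 then 0 else if q mod 3 = 1 then 1 else -1)"

end

theory Submission
  imports Defs "HOL-Algebra.Algebraic_Closure_Type"
begin

lemma alg_closed_infinite: "infinite (UNIV :: 'a :: alg_closed_field set)"
proof
  assume fin: "finite (UNIV :: 'a set)"
  define p :: "'a poly" where "p = (\<Prod>a\<in>UNIV. [:-a, 1:]) + 1"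
  have d: "Polynomial.degree (\<Prod>a\<in>(UNIV::'a set). [:-a, 1:]) = card (UNIV :: 'a set)"
    by (subst degree_prod_eq_sum_degree) auto
  have "card (UNIV :: 'a set) > 0" using fin by (simp add: finite_UNIV_card_ge_0)
  hence "Polynomial.degree p > 0" unfolding p_def using d
    by (metis add.commute degree_add_eq_right degree_1)
  then obtain x where "poly p x = 0" using alg_closed_imp_poly_has_root by blast
  moreover have "poly (\<Prod>a\<in>(UNIV::'a set). [:-a, 1:]) x = 0"
    by (simp add: poly_prod fin)
  ultimately show False unfolding p_def by simp
qed

lemma poly_eq_cofinite:
  fixes p r :: "'a :: alg_closed_field poly"
  assumes "finite S" "\<And>x. x \<notin> S \<Longrightarrow> poly p x = poly r x"
  shows "p = r"
proof (rule ccontr)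
  assume "p \<noteq> r"
  hence "p - r \<noteq> 0" by simp
  hence fin: "finite {x. poly (p - r) x = 0}" by (rule poly_roots_finite)
  have "UNIV \<subseteq> S \<union> {x. poly (p - r) x = 0}" using assms(2) by auto
  hence "finite (UNIV :: 'a set)" using fin assms(1) finite_subset by blast
  thus False using alg_closed_infinite by blast
qed

abbreviation pcoeff :: "'a::zero poly \<Rightarrow> nat \<Rightarrow> 'a" where "pcoeff \<equiv> Polynomial.coeff"
abbreviation pdeg :: "'a::zero poly \<Rightarrow> nat" where "pdeg \<equiv> Polynomial.degree"
abbreviation psmult :: "'a::comm_semiring_0 \<Rightarrow> 'a poly \<Rightarrow> 'a poly" where "psmult \<equiv> Polynomial.smult"
abbreviation pmonom :: "'a::zero \<Rightarrow> nat \<Rightarrow> 'a poly" where "pmonom \<equiv> Polynomial.monom"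

definition Mop :: "nat \<Rightarrow> 'a::comm_ring_1 poly \<Rightarrow> 'a poly" where
  "Mop q f = (\<Sum>i<q. psmult (pcoeff f i) ([:1,-1:]^(q-1-i)))"

lemma Mop_monom: "k < q \<Longrightarrow> Mop q (pmonom 1 k) = [:1,-1:]^(q-1-k)"
  unfolding Mop_def by (simp add: coeff_monom if_distrib[of "\<lambda>c. psmult c _"] cong: if_cong)

lemma degree_lin_pow: "pdeg ([:1,-1::'a::comm_ring_1:]^m) \<le> m"
  by (rule order.trans[OF degree_power_le]) simp

lemma coeff_Mop: "pcoeff (Mop q f) j = (\<Sum>i<q. pcoeff f i * pcoeff ([:1,-1:]^(q-1-i)) j)"
  unfolding Mop_def by (simp add: coeff_sum)

lemma degree_Mop: "pdeg (Mop q f) \<le> q - 1"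
proof (rule degree_le, intro allI impI)
  fix j assume j: "q - 1 < j"
  have "pcoeff ([:1,-1::'a:]^(q-1-i)) j = 0" for i
    by (rule coeff_eq_0) (use degree_lin_pow[of "q-1-i", where 'a='a] j in auto)
  thus "pcoeff (Mop q f) j = 0" by (simp add: coeff_Mop)
qed

lemma poly_sum_lt:
  fixes f :: "'a::comm_semiring_1 poly"
  assumes "pdeg f < q"
  shows "poly f y = (\<Sum>i<q. pcoeff f i * y^i)"
proof -
  have "poly f y = (\<Sum>i\<le>pdeg f. pcoeff f i * y ^ i)" by (simp add: poly_altdef)
  also have "\<dots> = (\<Sum>i<q. pcoeff f i * y^i)"
    by (rule sum.mono_neutral_left) (use assms in \<open>auto simp: coeff_eq_0\<close>)
  finally show ?thesis .
qed

lemma poly_Mop: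
  fixes f :: "'a::field poly"
  assumes q: "q > 0" and d: "pdeg f < q" and x: "x \<noteq> 1"
  shows "poly (Mop q f) x = (1-x)^(q-1) * poly f (1/(1-x))"
proof -
  have "poly (Mop q f) x = (\<Sum>i<q. pcoeff f i * (1-x)^(q-1-i))"
    unfolding Mop_def by (simp add: poly_sum)
  also have "\<dots> = (\<Sum>i<q. (1-x)^(q-1) * (pcoeff f i * (1/(1-x))^i))"
  proof (rule sum.cong[OF refl])
    fix i assume "i \<in> {..<q}"
    hence "i \<le> q - 1" by auto
    moreover have "1 - x \<noteq> 0" using x by simp
    ultimately have "(1-x)^(q-1-i) = (1-x)^(q-1) / (1-x)^i" using power_diff[of "1-x" i "q-1"] by simp
    thus "pcoeff f i * (1-x)^(q-1-i) = (1-x)^(q-1) * (pcoeff f i * (1/(1-x))^i)"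
      by (simp add: power_one_over)
  qed
  also have "\<dots> = (1-x)^(q-1) * poly f (1/(1-x))"
    by (simp add: poly_sum_lt[OF d] sum_distrib_left)
  finally show ?thesis .
qed

lemma Mop_cube:
  fixes f :: "'a::alg_closed_field poly"
  assumes q: "q > 0" and d: "pdeg f < q"
  shows "Mop q (Mop q (Mop q f)) = psmult ((-1)^(q-1)) f"
proof (rule poly_eq_cofinite[of "{0,1}"])
  fix x :: 'a assume "x \<notin> {0,1}"
  hence x0: "x \<noteq> 0" and x1: "x \<noteq> 1" by auto
  have dM: "pdeg (Mop q g) < q" for g :: "'a poly"
    using degree_Mop[of q g] q by linarith
  define y1 where "y1 = 1/(1-x)"
  define y2 where "y2 = 1/(1-y1)"
  have y10: "y1 \<noteq> 0" and y11: "y1 \<noteq> 1" using x0 x1 by (auto simp: y1_def field_simps)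
  have y2e: "y2 = (x - 1)/x" using x0 x1 by (simp add: y2_def y1_def field_simps)
  have y21: "y2 \<noteq> 1" using x0 by (simp add: y2e field_simps)
  have y3: "1/(1-y2) = x" using x0 by (simp add: y2e field_simps)
  have prod: "(1-x)*(1-y1)*(1-y2) = -1" using x0 x1 by (simp add: y2e y1_def field_simps)
  have "poly (Mop q (Mop q (Mop q f))) x = (1-x)^(q-1) * poly (Mop q (Mop q f)) y1"
    using poly_Mop[OF q dM x1] y1_def by simp
  also have "\<dots> = (1-x)^(q-1) * ((1-y1)^(q-1) * poly (Mop q f) y2)"
    using poly_Mop[OF q dM y11] y2_def by simp
  also have "\<dots> = (1-x)^(q-1) * ((1-y1)^(q-1) * ((1-y2)^(q-1) * poly f x))"
    using poly_Mop[OF q d y21] y3 by simp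
  also have "\<dots> = ((1-x)*(1-y1)*(1-y2))^(q-1) * poly f x"
    by (simp add: power_mult_distrib)
  also have "\<dots> = poly (psmult ((-1)^(q-1)) f) x" by (simp add: prod)
  finally show "poly (Mop q (Mop q (Mop q f))) x = poly (psmult ((-1)^(q-1)) f) x" .
qed simp

definition matp :: "nat \<Rightarrow> (nat \<Rightarrow> 'a::zero poly) \<Rightarrow> 'a mat" where
  "matp q G = mat q q (\<lambda>(j,k). pcoeff (G k) j)"

lemma matp_carrier[simp]: "matp q G \<in> carrier_mat q q"
  and matp_dim[simp]: "dim_row (matp q G) = q" "dim_col (matp q G) = q"
  by (auto simp: matp_def)

lemma matp_index[simp]: "j < q \<Longrightarrow> k < q \<Longrightarrow> matp q G $$ (j,k) = pcoeff (G k) j"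
  by (simp add: matp_def)

lemma matp_cong: "(\<And>k. k < q \<Longrightarrow> G k = G' k) \<Longrightarrow> matp q G = matp q G'"
  by (rule eq_matI) auto

lemma matp_mult:
  fixes F G :: "nat \<Rightarrow> 'a::comm_ring_1 poly"
  shows "matp q F * matp q G = matp q (\<lambda>k. \<Sum>i<q. psmult (pcoeff (G k) i) (F i))"
proof (rule eq_matI)
  fix j k assume j: "j < dim_row (matp q (\<lambda>k. \<Sum>i<q. psmult (pcoeff (G k) i) (F i)))"
    and k: "k < dim_col (matp q (\<lambda>k. \<Sum>i<q. psmult (pcoeff (G k) i) (F i)))"
  hence j: "j < q" and k: "k < q" by auto
  have "(matp q F * matp q G) $$ (j,k) = (\<Sum>i = 0..<q. pcoeff (F i) j * pcoeff (G k) i)"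
    using j k by (simp add: scalar_prod_def)
  also have "\<dots> = (\<Sum>i<q. pcoeff (G k) i * pcoeff (F i) j)"
    by (simp add: atLeast0LessThan mult.commute)
  finally show "(matp q F * matp q G) $$ (j,k) = matp q (\<lambda>k. \<Sum>i<q. psmult (pcoeff (G k) i) (F i)) $$ (j,k)"
    using j k by (simp add: coeff_sum)
qed auto

lemma matp_monom: "matp q (\<lambda>k. pmonom 1 k) = (1\<^sub>m q :: 'a::comm_ring_1 mat)"
  by (rule eq_matI) (auto simp: coeff_monom)

lemma matp_smult: "matp q (\<lambda>k. psmult c (G k)) = (c \<cdot>\<^sub>m matp q G :: 'a::comm_ring_1 mat)"
  by (rule eq_matI) auto

definition Amat :: "nat \<Rightarrow> 'a::comm_ring_1 mat" where
  "Amat q = matp q (\<lambda>i. [:1,-1:]^(q-1-i))"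

lemma Amat_mult: "Amat q * matp q G = matp q (\<lambda>k. Mop q (G k))"
  unfolding Amat_def matp_mult Mop_def ..

lemma Amat_carrier[simp]: "Amat q \<in> carrier_mat q q"
  by (simp add: Amat_def)

lemma Amat_cube:
  assumes q: "q > 0"
  shows "Amat q * (Amat q * Amat q) = ((-1)^(q-1) \<cdot>\<^sub>m 1\<^sub>m q :: 'a::alg_closed_field mat)"
proof -
  have A: "Amat q = matp q (\<lambda>k. Mop q (pmonom (1::'a) k))"
    unfolding Amat_def by (rule matp_cong) (simp add: Mop_monom)
  have "Amat q * (Amat q * Amat q) = matp q (\<lambda>k. Mop q (Mop q (Mop q (pmonom (1::'a) k))))"
    by (subst (3) A) (simp add: Amat_mult)
  also have "\<dots> = matp q (\<lambda>k. psmult ((-1)^(q-1)) (pmonom 1 k))"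
    by (rule matp_cong, rule Mop_cube[OF q]) (simp add: degree_monom_eq)
  also have "\<dots> = (-1)^(q-1) \<cdot>\<^sub>m 1\<^sub>m q" by (simp add: matp_smult matp_monom)
  finally show ?thesis .
qed

lemma sum_pcompose:
  fixes g r :: "'a::alg_closed_field poly"
  assumes "pdeg g < q"
  shows "(\<Sum>i<q. psmult (pcoeff g i) (r^i)) = pcompose g r"
  by (rule poly_eq_cofinite[of "{}"]) (auto simp: poly_sum poly_pcompose poly_sum_lt[OF assms])

definition Tmat :: "nat \<Rightarrow> 'a::comm_ring_1 \<Rightarrow> 'a mat" where
  "Tmat q c = matp q (\<lambda>k. [:c,1:]^k)"

lemma Tmat_mult:
  fixes G :: "nat \<Rightarrow> 'a::alg_closed_field poly"
  assumes "\<And>k. k < q \<Longrightarrow> pdeg (G k) < q"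
  shows "Tmat q c * matp q G = matp q (\<lambda>k. pcompose (G k) [:c,1:])"
  unfolding Tmat_def matp_mult by (rule matp_cong) (rule sum_pcompose[OF assms])

lemma degree_lin_pow2: "pdeg ([:c,1::'a::comm_ring_1:]^m) \<le> m"
  by (rule order.trans[OF degree_power_le]) simp

lemma Tmat_inv:
  fixes c :: "'a::alg_closed_field"
  shows "Tmat q c * Tmat q (-c) = 1\<^sub>m q"
proof -
  have "Tmat q c * Tmat q (-c) = matp q (\<lambda>k. pcompose ([:-c,1:]^k) [:c,1:])"
    unfolding Tmat_def[of q "-c"]
    by (rule Tmat_mult) (use degree_lin_pow2 le_less_trans in blast)
  also have "\<dots> = matp q (\<lambda>k. pmonom 1 k)"
    by (rule matp_cong, rule poly_eq_cofinite[of "{}"]) (auto simp: poly_pcompose poly_monom)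
  finally show ?thesis by (simp add: matp_monom)
qed


definition hpol :: "nat \<Rightarrow> 'a::comm_ring_1 \<Rightarrow> nat \<Rightarrow> 'a poly" where
  "hpol q a k = psmult (a^k) (pmonom 1 k * [:1-a,-1:]^(q-1-k))"

lemma degree_hpol: "k < q \<Longrightarrow> pdeg (hpol q a k) < q"
proof -
  assume k: "k < q"
  have "pdeg (hpol q a k) \<le> pdeg (pmonom 1 k * [:1-a,-1:]^(q-1-k))"
    unfolding hpol_def by (rule degree_smult_le)
  also have "\<dots> \<le> pdeg (pmonom (1::'a) k) + pdeg ([:1-a,-1:]^(q-1-k))" by (rule degree_mult_le)
  also have "\<dots> \<le> k + (q-1-k)"
    by (intro add_mono degree_monom_le order.trans[OF degree_power_le]) simp
  finally show ?thesis using k by linarith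
qed

lemma hpol_compose:
  fixes a :: "'a::alg_closed_field"
  assumes a: "a*a - a + 1 = 0" and k: "k < q"
  shows "pcompose (hpol q a k) [:-a,1:] = Mop q ([:-a,1:]^k)"
proof (rule poly_eq_cofinite[of "{1}"])
  fix x :: 'a assume "x \<notin> {1}"
  hence x: "x \<noteq> 1" by auto
  have q: "q > 0" using k by auto
  have d: "pdeg ([:-a,1:]^k) < q" using degree_lin_pow2[of "-a" k] k by linarith
  have x1: "1 - x \<noteq> 0" using x by auto
  have e1: "(1-x)^(q-1) = (1-x)^(q-1-k) * (1-x)^k"
    using k by (simp flip: power_add)
  have aa: "a*a = a - 1" using a by (simp add: algebra_simps eq_diff_eq)
  have "(1-x) * (1/(1-x) - a) = 1 - a + a*x" using x1 by (simp add: field_simps)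
  also have "\<dots> = a * (x - a)" by (simp add: right_diff_distrib aa)
  finally have e2: "(1-x) * (1/(1-x) - a) = a * (x - a)" .
  have "poly (Mop q ([:-a,1:]^k)) x = (1-x)^(q-1) * (1/(1-x) - a)^k"
    by (simp add: poly_Mop[OF q d x] poly_power)
  also have "\<dots> = (1-x)^(q-1-k) * ((1-x) * (1/(1-x) - a))^k"
    by (simp only: e1 power_mult_distrib mult.assoc)
  also have "\<dots> = (1-x)^(q-1-k) * (a * (x - a))^k" by (simp only: e2)
  also have "\<dots> = poly (pcompose (hpol q a k) [:-a,1:]) x"
  proof -
    have p1: "poly [:-a,1:] x = x - a" by simp
    have p2: "poly [:1-a,-1:] (x - a) = 1 - x" by (simp add: algebra_simps)
    show ?thesis by (simp only: hpol_def poly_pcompose poly_smult poly_mult poly_monom poly_power p1 p2)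
      (simp add: power_mult_distrib mult_ac)
  qed
  finally show "poly (pcompose (hpol q a k) [:-a,1:]) x = poly (Mop q ([:-a,1:]^k)) x" by simp
qed simp

definition Umat :: "nat \<Rightarrow> 'a::comm_ring_1 \<Rightarrow> 'a mat" where
  "Umat q a = matp q (hpol q a)"

lemma char_poly_Amat:
  fixes a :: "'a::alg_closed_field"
  assumes a: "a*a - a + 1 = 0"
  shows "char_poly (Amat q :: 'a mat) = (\<Prod>i<q. [:-(a^i * (1-a)^(q-1-i)), 1:])"
proof -
  define T where "T = Tmat q (-a)"
  define T' where "T' = Tmat q a"
  define U where "U = Umat q a"
  have TT': "T * T' = 1\<^sub>m q" unfolding T_def T'_def using Tmat_inv[of q "-a"] by simp
  have T'T: "T' * T = 1\<^sub>m q" unfolding T_def T'_def using Tmat_inv[of q a] by simp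
  have carr: "T \<in> carrier_mat q q" "T' \<in> carrier_mat q q" "U \<in> carrier_mat q q"
    by (auto simp: T_def T'_def U_def Tmat_def Umat_def)
  have AT: "Amat q * T = T * U"
  proof -
    have "Amat q * T = matp q (\<lambda>k. Mop q ([:-a,1:]^k))"
      unfolding T_def Tmat_def Amat_mult ..
    also have "\<dots> = matp q (\<lambda>k. pcompose (hpol q a k) [:-a,1:])"
      by (rule matp_cong) (simp add: hpol_compose[OF a])
    also have "\<dots> = T * U"
      unfolding T_def U_def Umat_def by (rule Tmat_mult[symmetric]) (rule degree_hpol)
    finally show ?thesis .
  qed
  have "Amat q = Amat q * (T * T')" using TT' right_mult_one_mat[OF Amat_carrier] by metis
  also have "\<dots> = (Amat q * T) * T'" using assoc_mult_mat[OF Amat_carrier carr(1) carr(2)] by simp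
  also have "\<dots> = T * U * T'" using AT by simp
  finally have "similar_mat_wit (Amat q) U T T'"
    unfolding similar_mat_wit_def Let_def using carr TT' T'T by auto
  hence "char_poly (Amat q) = char_poly U"
    by (intro char_poly_similar) (auto simp: similar_mat_def)
  also have "\<dots> = char_poly (transpose_mat U)"
    using carr by (simp add: char_poly_transpose_mat)
  also have "\<dots> = (\<Prod>x\<leftarrow>diag_mat (transpose_mat U). [:- x, 1:])"
  proof (rule char_poly_upper_triangular)
    show "transpose_mat U \<in> carrier_mat q q" using carr by simp
    show "upper_triangular (transpose_mat U)"
      unfolding upper_triangular_def using carr
      by (auto simp: U_def Umat_def hpol_def coeff_monom_mult)
  qed
  also have "diag_mat (transpose_mat U) = map (\<lambda>i. a^i * (1-a)^(q-1-i)) [0..<q]"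
    using carr by (auto simp: diag_mat_def U_def Umat_def hpol_def coeff_monom_mult coeff_0_power)
  also have "(\<Prod>x\<leftarrow>map (\<lambda>i. a^i * (1-a)^(q-1-i)) [0..<q]. [:- x, 1:]) = (\<Prod>i<q. [:-(a^i * (1-a)^(q-1-i)), 1:])"
    by (simp add: prod.distinct_set_conv_list[symmetric] atLeast0LessThan comp_def)
  finally show ?thesis .
qed


lemma triple_prod:
  fixes b w :: "'a::alg_closed_field"
  assumes w: "w*w + w + 1 = 0" and b: "b^3 = 1"
  shows "[:-b,1:]*[:-(b*w),1:]*[:-(b*w*w),1:] = [:-1,1:]*[:1,1,1:]"
proof (rule poly_eq_cofinite[of "{}"])
  fix x :: 'a
  have w3: "w^3 = 1"
  proof -
    have "w^3 - 1 = (w - 1) * (w*w + w + 1)" by (simp add: algebra_simps power3_eq_cube)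
    thus ?thesis using w by simp
  qed
  have "(x-b)*(x-b*w)*(x-b*w*w) = x^3 - b*(w*w+w+1)*x^2 + b^2*w*(w*w+w+1)*x - b^3*w^3"
    by (simp add: algebra_simps power2_eq_square power3_eq_cube)
  also have "\<dots> = (x - 1) * (1 + x + x*x)" using w w3 b
    by (simp add: algebra_simps power3_eq_cube)
  finally show "poly ([:-b,1:]*[:-(b*w),1:]*[:-(b*w*w),1:]) x = poly ([:-1,1:]*[:1,1,1:]) x"
    by (simp add: algebra_simps)
qed simp

lemma pair_prod:
  fixes w :: "'a::alg_closed_field"
  assumes w: "w*w + w + 1 = 0"
  shows "[:-w,1:]*[:-(w*w),1:] = [:1,1,1:]"
proof (rule poly_eq_cofinite[of "{}"])
  fix x :: 'a
  have w3: "w*w*w = 1"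
  proof -
    have "w*w*w - 1 = (w - 1) * (w*w + w + 1)" by (simp add: algebra_simps)
    thus ?thesis using w by simp
  qed
  have "(x-w)*(x-w*w) = x*x - (w*w+w+1)*x + x + w*w*w" by (simp add: algebra_simps)
  also have "\<dots> = 1 + x + x*x" using w w3 by simp
  finally show "poly ([:-w,1:]*[:-(w*w),1:]) x = poly [:1,1,1:] x"
    by (simp add: algebra_simps)
qed simp

lemma w_cube:
  fixes w :: "'a::comm_ring_1"
  assumes w: "w*w + w + 1 = 0"
  shows "w^3 = 1"
proof -
  have "w^3 - 1 = (w - 1) * (w*w + w + 1)" by (simp add: algebra_simps power3_eq_cube)
  thus ?thesis using w by simp
qed

lemma prod_triples:
  fixes w :: "'a::alg_closed_field"
  assumes w: "w*w + w + 1 = 0"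
  shows "(\<Prod>i<3*m. [:-(w^(s+i)),1:]) = ([:-1,1:]*[:1,1,1:])^m"
proof (induction m)
  case (Suc m)
  have e: "3 * Suc m = Suc (Suc (Suc (3*m)))" by simp
  define b where "b = w^(s+3*m)"
  have b3: "b^3 = 1"
  proof -
    have "b^3 = w^((s+3*m)*3)" unfolding b_def by (simp only: power_mult)
    also have "\<dots> = (w^3)^(s+3*m)" by (simp only: power_mult[symmetric] mult.commute)
    finally show ?thesis by (simp add: w_cube[OF w])
  qed
  have "(\<Prod>i<3*Suc m. [:-(w^(s+i)),1:]) = (\<Prod>i<3*m. [:-(w^(s+i)),1:]) *
     ([:-b,1:]*[:-(b*w),1:]*[:-(b*w*w),1:])"
  proof -
    have f1: "w^(s+3*m) = b" by (simp add: b_def)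
    have f2: "w^(s+Suc (3*m)) = b*w" by (simp add: b_def)
    have f3: "w^(s+Suc (Suc (3*m))) = b*w*w" by (simp add: b_def)
    show ?thesis by (simp only: e prod.lessThan_Suc f1 f2 f3 mult.assoc)
  qed
  also have "\<dots> = ([:-1,1:]*[:1,1,1:])^Suc m"
    by (simp only: Suc.IH triple_prod[OF w b3] power_Suc2)
  finally show ?case .
qed simp

lemma prod_count:
  fixes w :: "'a::alg_closed_field"
  assumes w: "w*w + w + 1 = 0" and q: "q > 0"
  shows "(\<Prod>i<q. [:-(w^(q-1+i)),1:]) =
    [:1, 1, 1:] ^ nat ((int q - eps3 q) div 3) * [:-1, 1:] ^ nat ((int q + 2 * eps3 q) div 3)"
proof -
  have w3: "w^3 = 1" by (rule w_cube[OF w])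
  have wp: "w^(3*k + j) = w^j" for k j
    by (simp add: power_add power_mult w3)
  define m where "m = q div 3"
  have "q mod 3 = 0 \<or> q mod 3 = 1 \<or> q mod 3 = 2" by arith
  moreover
  { assume r: "q mod 3 = 0"
    hence qm: "q = 3*m" unfolding m_def by arith
    have "(\<Prod>i<q. [:-(w^(q-1+i)),1:]) = ([:-1,1:]*[:1,1,1:])^m"
      unfolding qm by (rule prod_triples[OF w])
    hence "(\<Prod>i<q. [:-(w^(q-1+i)),1:]) = [:1,1,1:]^m * [:-1,1:]^m"
      by (simp only: power_mult_distrib mult.commute)
    moreover have "eps3 q = 0" using r by (simp add: eps3_def)
    moreover have "nat (int q div 3) = m" using qm by simp
    ultimately have ?thesis by simp
  }
  moreover
  { assume r: "q mod 3 = 1"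
    hence qm: "q = Suc (3*m)" unfolding m_def by arith
    have "(\<Prod>i<q. [:-(w^(q-1+i)),1:]) = ([:-1,1:]*[:1,1,1:])^m * [:-(w^(3*(2*m))),1:]"
      unfolding qm by (simp add: prod_triples[OF w] mult_2)
    also have "\<dots> = [:1,1,1:]^m * [:-1,1:]^(Suc m)"
    proof -
      have "w^(3*(2*m)) = 1" using wp[of "2*m" 0] by simp
      thus ?thesis by (simp only: power_mult_distrib power_Suc mult_ac)
    qed
    finally have 1: "(\<Prod>i<q. [:-(w^(q-1+i)),1:]) = [:1,1,1:]^m * [:-1,1:]^(Suc m)" .
    have "eps3 q = 1" using r by (simp add: eps3_def)
    moreover have "nat ((int q - 1) div 3) = m" "nat ((int q + 2) div 3) = Suc m" using qm by simp_all
    ultimately have ?thesis using 1 by simp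
  }
  moreover
  { assume r: "q mod 3 = 2"
    hence qm: "q = Suc (Suc (3*m))" unfolding m_def by arith
    have "(\<Prod>i<q. [:-(w^(q-1+i)),1:]) = (\<Prod>i<Suc (Suc (3*m)). [:-(w^(Suc (3*m)+i)),1:])"
      by (rule prod.cong) (use qm in auto)
    also have "\<dots> = (\<Prod>i<3*m. [:-(w^(Suc (3*m)+i)),1:]) * [:-(w^(Suc (3*m)+3*m)),1:] * [:-(w^(Suc (3*m)+Suc (3*m))),1:]"
      by (simp only: prod.lessThan_Suc)
    also have "\<dots> = ([:-1,1:]*[:1,1,1:])^m * ([:-w,1:] * [:-(w*w),1:])"
    proof -
      have "Suc (3*m)+3*m = 3*(2*m)+1" "Suc (3*m)+Suc (3*m) = 3*(2*m)+2" by simp_all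
      hence "w^(Suc (3*m)+3*m) = w" "w^(Suc (3*m)+Suc (3*m)) = w*w"
        using wp[of "2*m" 1] wp[of "2*m" 2] by (simp_all add: power2_eq_square)
      thus ?thesis by (simp only: prod_triples[OF w] mult.assoc)
    qed
    also have "\<dots> = [:1,1,1:]^(Suc m) * [:-1,1:]^m"
      by (simp only: pair_prod[OF w] power_mult_distrib power_Suc mult_ac)
    finally have 1: "(\<Prod>i<q. [:-(w^(q-1+i)),1:]) = [:1,1,1:]^(Suc m) * [:-1,1:]^m" .
    have "eps3 q = -1" using r by (simp add: eps3_def)
    moreover have "nat ((int q + 1) div 3) = Suc m" "nat ((int q - 2) div 3) = m" using qm by simp_all
    ultimately have ?thesis using 1 by simp
  }
  ultimately show ?thesis by meson
qed


lemma char_poly_Amat_final: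
  assumes q: "q > 0" and sgn: "(-1::'a::alg_closed_field)^(q-1) = 1"
  shows "char_poly (Amat q :: 'a mat) =
    [:1, 1, 1:] ^ nat ((int q - eps3 q) div 3) * [:-1, 1:] ^ nat ((int q + 2 * eps3 q) div 3)"
proof -
  have "pdeg [:1,-1,1::'a:] > 0" by simp
  then obtain a :: 'a where "poly [:1,-1,1:] a = 0" using alg_closed_imp_poly_has_root by blast
  hence a: "a*a - a + 1 = 0" by (simp add: algebra_simps)
  have aa: "a*a = a - 1" using a by (simp add: algebra_simps eq_diff_eq)
  define w where "w = a*a"
  have w: "w*w + w + 1 = 0"
  proof -
    have "w*w = (a*a)*(a*a)" by (simp add: w_def)
    also have "\<dots> = (a-1)*(a-1)" by (simp add: aa)
    also have "\<dots> = a*a - 2*a + 1" by (simp add: algebra_simps)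
    also have "\<dots> = -a" by (simp add: aa)
    finally show ?thesis by (simp add: w_def aa)
  qed
  have a1: "a * (1-a) = 1" using aa by (simp add: algebra_simps)
  have d: "a^i * (1-a)^(q-1-i) = w^(q-1+i)" if i: "i < q" for i
  proof -
    have c1: "(1-a)^(q-1) = w^(q-1)"
    proof -
      have "1 - a = (-1) * w" by (simp add: w_def aa)
      hence "(1-a)^(q-1) = (-1)^(q-1) * w^(q-1)" by (simp only: power_mult_distrib)
      thus ?thesis by (simp only: sgn mult_1)
    qed
    have "a^i * (1-a)^(q-1-i) = a^i * (1-a)^(q-1-i) * (a*(1-a))^i" by (simp add: a1)
    also have "\<dots> = (a*a)^i * ((1-a)^(q-1-i) * (1-a)^i)" by (simp add: power_mult_distrib mult_ac)
    also have "(1-a)^(q-1-i) * (1-a)^i = (1-a)^(q-1)" using i by (simp flip: power_add)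
    also have "(a*a)^i * (1-a)^(q-1) = w^(q-1+i)"
      by (simp only: c1 w_def[symmetric] power_add mult.commute)
    finally show ?thesis .
  qed
  have "char_poly (Amat q :: 'a mat) = (\<Prod>i<q. [:-(a^i * (1-a)^(q-1-i)), 1:])"
    by (rule char_poly_Amat[OF a])
  also have "\<dots> = (\<Prod>i<q. [:-(w^(q-1+i)), 1:])"
    by (rule prod.cong[OF refl]) (metis d lessThan_iff)
  also have "\<dots> = [:1, 1, 1:] ^ nat ((int q - eps3 q) div 3) * [:-1, 1:] ^ nat ((int q + 2 * eps3 q) div 3)"
    by (rule prod_count[OF w q])
  finally show ?thesis .
qed

lemma coeff_1m: "pcoeff ([:1,-1::'a::comm_ring_1:]^m) j = (-1)^j * of_nat (m choose j)"
proof (cases "j \<le> m")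
  case True thus ?thesis by (simp add: coeff_linear_poly_power)
next
  case False
  hence "pcoeff ([:1,-1::'a:]^m) j = 0"
    using degree_lin_pow[of m, where 'a='a] by (intro coeff_eq_0) simp
  thus ?thesis using False by (simp add: binomial_eq_0)
qed

lemma choose_char_zero:
  assumes p: "Factorial_Ring.prime CHAR('a::comm_ring_1)" and q: "q = CHAR('a)^l" and j: "0 < j" "j < q"
  shows "of_nat (q choose j) = (0::'a)"
proof -
  have p': "Factorial_Ring.prime CHAR('a poly)" using p by simp
  have "([:0,1:] + 1 :: 'a poly)^q = [:0,1:]^q + 1^q"
    by (rule freshmans_dream'[OF p']) (simp add: q)
  hence "pcoeff (([:0,1:] + 1 :: 'a poly)^q) j = pcoeff ([:0,1:]^q + 1) j" by simp
  moreover have "([:0,1:] + 1 :: 'a poly) = [:1,1:]" by (simp add: one_pCons)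
  ultimately have "pcoeff ([:1,1::'a:]^q) j = pcoeff ([:0,1::'a:]^q) j + pcoeff 1 j" by simp
  thus ?thesis using j by (simp add: coeff_linear_poly_power power_0_left)
qed

lemma choose_qm1:
  assumes p: "Factorial_Ring.prime CHAR('a::comm_ring_1)" and q: "q = CHAR('a)^l" and l: "l \<ge> 1"
  shows "j < q \<Longrightarrow> of_nat ((q-1) choose j) = ((-1)^j::'a)"
proof (induction j)
  case (Suc j)
  have q1: "q = Suc (q-1)" using Suc.prems by simp
  have "of_nat (q choose Suc j) = (0::'a)"
    by (rule choose_char_zero[OF p q]) (use Suc.prems in auto)
  hence "of_nat ((q-1) choose j) + of_nat ((q-1) choose Suc j) = (0::'a)"
    by (subst (asm) q1) (simp del: binomial_Suc_Suc add: binomial_Suc_Suc[symmetric] of_nat_add[symmetric])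
  thus ?case using Suc by (simp add: eq_neg_iff_add_eq_0 add.commute)
qed simp

lemma pascal_cong:
  assumes p: "Factorial_Ring.prime CHAR('a::comm_ring_1)" and q: "q = CHAR('a)^l" and l: "l \<ge> 1"
  shows "i < q \<Longrightarrow> j < q \<Longrightarrow> (of_nat ((i+j) choose i) :: 'a) = (-1)^j * of_nat ((q-1-i) choose j)"
proof (induction i arbitrary: j)
  case 0
  thus ?case using choose_qm1[OF p q l 0(2)] by (simp flip: power_add mult_2)
next
  case (Suc i)
  note IHi = Suc.IH
  have iq: "Suc i < q" using Suc.prems by simp
  show ?case using Suc.prems(2)
  proof (induction j)
    case 0 thus ?case by simp
  next
    case (Suc j)
    define M where "M = q - 2 - i"
    have M: "q - 1 - i = Suc M" "q - 1 - Suc i = M" using iq unfolding M_def by auto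
    have "((Suc i + Suc j) choose Suc i) = ((i + Suc j) choose i) + ((Suc i + j) choose Suc i)" by simp
    hence "(of_nat ((Suc i + Suc j) choose Suc i) :: 'a) = of_nat ((i + Suc j) choose i) + of_nat ((Suc i + j) choose Suc i)"
      by simp
    also have "of_nat ((i + Suc j) choose i) = ((-1)^(Suc j) * of_nat ((q-1-i) choose Suc j) :: 'a)"
      using IHi[of "Suc j"] iq Suc.prems by simp
    also have "of_nat ((Suc i + j) choose Suc i) = ((-1)^j * of_nat ((q-1-Suc i) choose j) :: 'a)"
      using Suc.IH Suc.prems by simp
    finally show ?case unfolding M by (simp add: algebra_simps)
  qed
qed


lemma sign_lemma:
  assumes p: "Factorial_Ring.prime CHAR('a::comm_ring_1)" and q: "q = CHAR('a)^l" and l: "l \<ge> 1"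
  shows "(-1::'a)^(q-1) = 1"
proof (cases "CHAR('a) = 2")
  case True
  have "(of_nat 2 :: 'a) = 0" using True by (metis of_nat_CHAR)
  hence h2: "(2::'a) = 0" by simp
  have "(-1::'a) = 1 - 2" by simp
  also have "\<dots> = 1" using h2 by simp
  finally have m1: "(-1::'a) = 1" .
  show ?thesis by (simp only: m1 power_one)
next
  case False
  hence "CHAR('a) > 2" using p prime_ge_2_nat[of "CHAR('a)"] by linarith
  hence "odd CHAR('a)" using p prime_odd_nat by blast
  hence "odd q" using q by simp
  hence "even (q - 1)" by simp
  thus ?thesis by simp
qed

lemma map_mat_inj:
  assumes "M1 \<in> carrier_mat n m" "M2 \<in> carrier_mat n m" "map_mat (to_ac :: 'a::field \<Rightarrow> 'a alg_closure) M1 = map_mat to_ac M2"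
  shows "M1 = M2"
proof (rule eq_matI)
  fix i j assume "i < dim_row M2" "j < dim_col M2"
  thus "M1 $$ (i,j) = M2 $$ (i,j)" using assms
    by (metis (no_types, lifting) carrier_matD index_map_mat to_ac_eq_iff)
qed (use assms in auto)

lemma map_poly_inj_ac:
  assumes "map_poly (to_ac :: 'a::field \<Rightarrow> 'a alg_closure) p = map_poly to_ac r"
  shows "p = r"
proof (rule poly_eqI)
  fix n
  have "pcoeff (map_poly (to_ac :: 'a::field \<Rightarrow> 'a alg_closure) p) n = pcoeff (map_poly to_ac r) n"
    using assms by simp
  thus "pcoeff p n = pcoeff r n" by (simp add: coeff_map_poly)
qed

lemma map_target:
  "map_poly (to_ac :: 'p::prime_card mod_ring \<Rightarrow> 'p mod_ring alg_closure) ([:1,1,1:]^n * [:-1,1:]^m) = [:1,1,1:]^n * [:-1,1:]^m"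
proof -
  interpret h: comm_ring_hom "to_ac :: 'p mod_ring \<Rightarrow> 'p mod_ring alg_closure"
    by unfold_locales simp_all
  interpret mp: map_poly_comm_ring_hom "to_ac :: 'p mod_ring \<Rightarrow> 'p mod_ring alg_closure" ..
  have 1: "map_poly (to_ac :: 'p mod_ring \<Rightarrow> 'p mod_ring alg_closure) [:1,1,1:] = [:1,1,1:]"
    by (simp add: map_poly_pCons)
  have 2: "map_poly (to_ac :: 'p mod_ring \<Rightarrow> 'p mod_ring alg_closure) [:-1,1:] = [:-1,1:]"
    by (simp add: map_poly_pCons)
  show ?thesis by (simp only: mp.hom_mult mp.hom_power 1 2)
qed

theorem proposition1p2:
  fixes l q :: nat
  assumes "l \<ge> 1"
    and "q = CARD('p :: prime_card) ^ l"
  shows "invertible_mat (pascal_mat q :: 'p mod_ring mat)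
    \<and> mat_mult_order (pascal_mat q :: 'p mod_ring mat) = 3
    \<and> char_poly (pascal_mat q :: 'p mod_ring mat)
        = [:1, 1, 1:] ^ nat ((int q - eps3 q) div 3)
          * [:-1, 1:] ^ nat ((int q + 2 * eps3 q) div 3)"
proof -
  note l = assms(1)
  have pF: "Factorial_Ring.prime CHAR('p mod_ring)" using prime_card[where 'a='p] by simp
  have qF: "q = CHAR('p mod_ring)^l" using assms(2) by simp
  have pK: "Factorial_Ring.prime CHAR('p mod_ring alg_closure)" using pF by simp
  have qK: "q = CHAR('p mod_ring alg_closure)^l" using qF by simp
  have q2: "q \<ge> 2"
  proof -
    have "CARD('p) \<ge> 2" using prime_card[where 'a='p] prime_ge_2_nat by blast
    hence "CARD('p)^l \<ge> CARD('p)" using l by (simp add: self_le_power)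
    thus ?thesis using \<open>CARD('p) \<ge> 2\<close> assms(2) by linarith
  qed
  hence q0: "q > 0" by simp
  define P where "P = (pascal_mat q :: 'p mod_ring mat)"
  define A where "A = (Amat q :: 'p mod_ring mat)"
  have Pc: "P \<in> carrier_mat q q" by (simp add: P_def pascal_mat_def)
  have Ac: "A \<in> carrier_mat q q" by (simp add: A_def)
  have PA: "P = transpose_mat A"
  proof (rule eq_matI)
    fix i j assume "i < dim_row (transpose_mat A)" "j < dim_col (transpose_mat A)"
    hence i: "i < q" and j: "j < q" using Ac by auto
    show "P $$ (i,j) = transpose_mat A $$ (i,j)"
      using i j pascal_cong[OF pF qF l i j]
      by (simp add: P_def pascal_mat_def A_def Amat_def coeff_1m)
  qed (use Ac Pc in auto)
  interpret h: comm_ring_hom "to_ac :: 'p mod_ring \<Rightarrow> 'p mod_ring alg_closure"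
    by unfold_locales simp_all
  have mapA: "map_mat to_ac A = (Amat q :: 'p mod_ring alg_closure mat)"
    by (rule eq_matI) (auto simp: A_def Amat_def coeff_1m)
  have sK: "(-1::'p mod_ring alg_closure)^(q-1) = 1" by (rule sign_lemma[OF pK qK l])
  have cubeA: "A * (A * A) = 1\<^sub>m q"
  proof (rule map_mat_inj)
    show "A * (A * A) \<in> carrier_mat q q" "1\<^sub>m q \<in> carrier_mat q q" using Ac by auto
    have "map_mat to_ac (A * (A * A)) = map_mat to_ac A * (map_mat to_ac A * map_mat to_ac A)"
      using h.mat_hom_mult[OF Ac, of "A*A" q] h.mat_hom_mult[OF Ac Ac] Ac by simp
    also have "\<dots> = (Amat q :: 'p mod_ring alg_closure mat) * (Amat q * Amat q)" by (simp add: mapA)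
    also have "\<dots> = 1\<^sub>m q"
    proof -
      have one_sm: "(1::'p mod_ring alg_closure) \<cdot>\<^sub>m (1\<^sub>m q) = 1\<^sub>m q" by (rule eq_matI) auto
      show ?thesis using Amat_cube[OF q0, where 'a="'p mod_ring alg_closure"] by (simp only: sK one_sm)
    qed
    also have "\<dots> = map_mat to_ac (1\<^sub>m q)" by (simp add: h.mat_hom_one)
    finally show "map_mat to_ac (A * (A * A)) = map_mat to_ac (1\<^sub>m q)" .
  qed
  have PPP: "P * P * P = 1\<^sub>m q"
  proof -
    have t1: "transpose_mat (A*A) = transpose_mat A * transpose_mat A" by (rule transpose_mult[OF Ac Ac])
    have AAc: "A * A \<in> carrier_mat q q" using Ac by simp
    have t2: "transpose_mat (A*(A*A)) = transpose_mat (A*A) * transpose_mat A" by (rule transpose_mult[OF Ac AAc])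
    have "P * P * P = transpose_mat (A * (A * A))" unfolding PA t2 t1 ..
    also have "\<dots> = 1\<^sub>m q" by (simp add: cubeA)
    finally show ?thesis .
  qed
  have P3: "P ^\<^sub>m 3 = 1\<^sub>m q"
    using PPP Pc by (simp add: numeral_3_eq_3)
  have inv: "invertible_mat P"
    unfolding invertible_mat_def inverts_mat_def
  proof (intro conjI exI)
    show "square_mat P" using Pc by simp
    have "P * (P * P) = P * P * P" by (rule assoc_mult_mat[symmetric, OF Pc Pc Pc])
    thus "P * (P * P) = 1\<^sub>m (dim_row P)" using PPP Pc by (simp only: carrier_matD)
    have "dim_row (P * P) = q" using Pc by simp
    thus "P * P * P = 1\<^sub>m (dim_row (P * P))" using PPP by (simp only:)
  qed
  have P1: "P \<noteq> 1\<^sub>m q"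
  proof
    assume "P = 1\<^sub>m q"
    hence "P $$ (0,1) = 0" using q2 by simp
    moreover have "P $$ (0,1) = 1" using q2 by (simp add: P_def pascal_mat_def)
    ultimately show False by simp
  qed
  have ord: "mat_mult_order P = 3"
    unfolding mat_mult_order_def
  proof (rule Least_equality)
    show "0 < (3::nat) \<and> P ^\<^sub>m 3 = 1\<^sub>m (dim_row P)" using P3 Pc by simp
    fix y assume y: "0 < y \<and> P ^\<^sub>m y = 1\<^sub>m (dim_row P)"
    show "3 \<le> y"
    proof (rule ccontr)
      assume "\<not> 3 \<le> y"
      hence "y = 1 \<or> y = 2" using y by auto
      thus False
      proof
        assume "y = 1"
        hence "P = 1\<^sub>m q" using y Pc by simp
        thus False using P1 by simp
      next
        assume "y = 2"
        hence PP: "P * P = 1\<^sub>m q" using y Pc by (simp add: numeral_2_eq_2)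
        hence "P * P * P = P" using Pc by simp
        thus False using PPP P1 by simp
      qed
    qed
  qed
  have cp: "char_poly P = [:1, 1, 1:] ^ nat ((int q - eps3 q) div 3) * [:-1, 1:] ^ nat ((int q + 2 * eps3 q) div 3)"
  proof (rule map_poly_inj_ac)
    have "map_poly to_ac (char_poly P) = map_poly to_ac (char_poly A)"
      unfolding PA using Ac by (simp add: char_poly_transpose_mat)
    also have "\<dots> = char_poly (map_mat to_ac A)"
      using h.char_poly_hom[OF Ac] by simp
    also have "\<dots> = [:1, 1, 1:] ^ nat ((int q - eps3 q) div 3) * [:-1, 1:] ^ nat ((int q + 2 * eps3 q) div 3)"
      unfolding mapA by (rule char_poly_Amat_final[OF q0 sK])
    also have "\<dots> = map_poly to_ac ([:1, 1, 1:] ^ nat ((int q - eps3 q) div 3) * [:-1, 1:] ^ nat ((int q + 2 * eps3 q) div 3))"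
      by (rule map_target[symmetric])
    finally show "map_poly to_ac (char_poly P) = map_poly to_ac ([:1, 1, 1:] ^ nat ((int q - eps3 q) div 3) * [:-1, 1:] ^ nat ((int q + 2 * eps3 q) div 3))" .
  qed
  show ?thesis using inv ord cp unfolding P_def by blast
qed

end
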